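(* Let $F$ be a minimally unsatisfiable clause-set. 1. If $v$ is a singular variable for $F$ which occurs (positively or negatively) in every clause of $F$, then $\{v\}\in F$ or $\{\overline{v}\}\in F$. 2. If $\{x\}\in F$ for some literal $x$, then $v:=\mathrm{var}(x)$ is singular for $F$, with $\mathrm{ldeg}_F(x)=1$. If moreover $F$ is saturated, then $v$ occurs in every clause of $F$.
   Context: Literals are variables $v$ and complements $\overline{v}$; a clause is a finite set of literals with no complementary pair; a clause-set is a finite set of clauses; $\mathrm{var}(F)$ is the set of variables of $F$ and $\mathrm{var}(x)$ the variable underlying literal $x$; $\mathrm{ldeg}_F(x)$ is the number of clauses of $F$ containing literal $x$. A minimally unsatisfiable $F$ is saturated if for every $C \in F$ and every literal $y$ with $\mathrm{var}(y) \in \mathrm{var}(F)\setminus \mathrm{var}(C)$, the clause-set $(F\setminus\{C\})\cup\{C\cup\{y\}\}$ is satisfiable. A variable $v$ is singular for $F$ if $\min(\mathrm{ldeg}_F(v),\mathrm{ldeg}_F(\overline{v}))=1$. *)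

theory Defs
  imports Main
begin

datatype 'v lit = Pos 'v | Neg 'v

fun var :: "'v lit \<Rightarrow> 'v" where
  "var (Pos v) = v" | "var (Neg v) = v"

fun comp :: "'v lit \<Rightarrow> 'v lit" where
  "comp (Pos v) = Neg v" | "comp (Neg v) = Pos v"

type_synonym 'v clause = "'v lit set"
type_synonym 'v cls = "'v clause set"

definition clause :: "'v clause \<Rightarrow> bool" where
  "clause C \<longleftrightarrow> finite C \<and> (\<forall>x\<in>C. comp x \<notin> C)"

definition clause_set :: "'v cls \<Rightarrow> bool" where
  "clause_set F \<longleftrightarrow> finite F \<and> (\<forall>C\<in>F. clause C)"

definition vars_cl :: "'v clause \<Rightarrow> 'v set" where
  "vars_cl C = var ` C"

definition vars :: "'v cls \<Rightarrow> 'v set" where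
  "vars F = (\<Union>C\<in>F. vars_cl C)"

definition ldeg :: "'v cls \<Rightarrow> 'v lit \<Rightarrow> nat" where
  "ldeg F x = card {C \<in> F. x \<in> C}"

fun sat_lit :: "('v \<Rightarrow> bool) \<Rightarrow> 'v lit \<Rightarrow> bool" where
  "sat_lit \<phi> (Pos v) = \<phi> v" | "sat_lit \<phi> (Neg v) = (\<not> \<phi> v)"

definition satisfiable :: "'v cls \<Rightarrow> bool" where
  "satisfiable F \<longleftrightarrow> (\<exists>\<phi>. \<forall>C\<in>F. \<exists>x\<in>C. sat_lit \<phi> x)"

definition min_unsat :: "'v cls \<Rightarrow> bool" where
  "min_unsat F \<longleftrightarrow> clause_set F \<and> \<not> satisfiable F \<and> (\<forall>C\<in>F. satisfiable (F - {C}))"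

definition saturated :: "'v cls \<Rightarrow> bool" where
  "saturated F \<longleftrightarrow> min_unsat F \<and>
     (\<forall>C\<in>F. \<forall>y. var y \<in> vars F - vars_cl C \<longrightarrow> satisfiable ((F - {C}) \<union> {C \<union> {y}}))"

definition singular :: "'v cls \<Rightarrow> 'v \<Rightarrow> bool" where
  "singular F v \<longleftrightarrow> min (ldeg F (Pos v)) (ldeg F (Neg v)) = 1"

end

theory Submission
  imports Defs
begin

lemma sat_comp[simp]: "sat_lit \<phi> (comp x) \<longleftrightarrow> \<not> sat_lit \<phi> x"
  by (cases x) auto

lemma var_comp[simp]: "var (comp x) = var x"
  by (cases x) auto

lemma sat_upd_other: "var l \<noteq> v \<Longrightarrow> sat_lit (\<phi>(v:=b)) l = sat_lit \<phi> l"
  by (cases l) auto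

lemma make_true: "\<exists>b. sat_lit (\<phi>(var x := b)) x"
  by (cases x) auto

lemma lit_same_var: "var y = var x \<Longrightarrow> y = x \<or> y = comp x"
  by (cases x; cases y) auto

lemma unsat_fact: "min_unsat F \<Longrightarrow> \<forall>C\<in>F. \<exists>z\<in>C. sat_lit \<phi> z \<Longrightarrow> False"
  unfolding min_unsat_def satisfiable_def by blast

lemma remove_sat: "min_unsat F \<Longrightarrow> C \<in> F \<Longrightarrow> \<exists>\<phi>. \<forall>D\<in>F - {C}. \<exists>z\<in>D. sat_lit \<phi> z"
  unfolding min_unsat_def satisfiable_def by blast

lemma part1:
  assumes mu: "min_unsat F" and deg: "ldeg F l = 1"
    and all: "\<forall>C\<in>F. var l \<in> vars_cl C"
  shows "{l} \<in> F"
proof -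
  from deg have "card {C\<in>F. l\<in>C} = 1" by (simp add: ldeg_def)
  then obtain C0 where C0: "{C\<in>F. l\<in>C} = {C0}" by (rule card_1_singletonE)
  hence C0F: "C0 \<in> F" and lC0: "l \<in> C0" and uniq: "\<And>C. C \<in> F \<Longrightarrow> l \<in> C \<Longrightarrow> C = C0"
    by auto
  have cl: "clause C0" using mu C0F unfolding min_unsat_def clause_set_def by blast
  have "C0 = {l}"
  proof (rule ccontr)
    assume "C0 \<noteq> {l}"
    then obtain y where y: "y \<in> C0" "y \<noteq> l" using lC0 by auto
    have vy: "var y \<noteq> var l"
    proof
      assume "var y = var l"
      then have "y = comp l" using lit_same_var y(2) by blast
      thus False using cl lC0 y(1) by (auto simp: clause_def)
    qed
    obtain b1 where b1: "sat_lit ((\<lambda>_. False)(var y := b1)) y" using make_true by blast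
    define \<phi>1 where "\<phi>1 = (\<lambda>_. False)(var y := b1)"
    obtain b2 where b2: "sat_lit (\<phi>1(var (comp l) := b2)) (comp l)" using make_true by blast
    define \<phi> where "\<phi> = \<phi>1(var l := b2)"
    have sy: "sat_lit \<phi> y" using b1 vy sat_upd_other[of y "var l" \<phi>1 b2]
      by (simp add: \<phi>_def \<phi>1_def)
    have sl: "sat_lit \<phi> (comp l)" using b2 by (simp add: \<phi>_def)
    have "\<forall>C\<in>F. \<exists>x\<in>C. sat_lit \<phi> x"
    proof
      fix C assume CF: "C \<in> F"
      show "\<exists>x\<in>C. sat_lit \<phi> x"
      proof (cases "l \<in> C")
        case True
        then have "C = C0" using uniq CF by blast
        thus ?thesis using sy y(1) by blast
      next
        case False
        from all CF obtain z where z: "z \<in> C" "var z = var l" by (auto simp: vars_cl_def)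
        then have "z = comp l" using lit_same_var False by blast
        thus ?thesis using z sl by blast
      qed
    qed
    thus False using mu unsat_fact by blast
  qed
  thus ?thesis using C0F by simp
qed

lemma ldeg_unit:
  assumes mu: "min_unsat F" and xF: "{x} \<in> F"
  shows "{C\<in>F. x\<in>C} = {{x}}"
proof -
  have "D = {x}" if DF: "D \<in> F" and xD: "x \<in> D" for D
  proof (rule ccontr)
    assume ne: "D \<noteq> {x}"
    from remove_sat[OF mu DF] obtain \<phi> where \<phi>: "\<forall>C\<in>F - {D}. \<exists>z\<in>C. sat_lit \<phi> z"
      by blast
    have "{x} \<in> F - {D}" using xF ne by blast
    then have "\<exists>z\<in>{x}. sat_lit \<phi> z" by (rule bspec[OF \<phi>])
    then have sx: "sat_lit \<phi> x" by simp
    have "\<forall>C\<in>F. \<exists>z\<in>C. sat_lit \<phi> z"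
    proof
      fix C assume "C \<in> F"
      show "\<exists>z\<in>C. sat_lit \<phi> z"
      proof (cases "C = D")
        case True thus ?thesis using sx xD by blast
      next
        case False thus ?thesis using \<phi> \<open>C \<in> F\<close> by blast
      qed
    qed
    thus False using mu unsat_fact by blast
  qed
  hence "{C\<in>F. x\<in>C} \<subseteq> {{x}}" by blast
  moreover have "{{x}} \<subseteq> {C\<in>F. x\<in>C}" using xF by blast
  ultimately show ?thesis by (rule subset_antisym)
qed

lemma comp_occurs:
  assumes mu: "min_unsat F" and xF: "{x} \<in> F"
  shows "\<exists>C\<in>F. comp x \<in> C"
proof (rule ccontr)
  assume no: "\<not> (\<exists>C\<in>F. comp x \<in> C)"
  from remove_sat[OF mu xF] obtain \<phi> where \<phi>: "\<forall>C\<in>F - {{x}}. \<exists>z\<in>C. sat_lit \<phi> z"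
    by blast
  obtain b where b: "sat_lit (\<phi>(var x := b)) x" using make_true by blast
  have "\<forall>C\<in>F. \<exists>z\<in>C. sat_lit (\<phi>(var x := b)) z"
  proof
    fix C assume CF: "C \<in> F"
    show "\<exists>z\<in>C. sat_lit (\<phi>(var x := b)) z"
    proof (cases "C = {x}")
      case True thus ?thesis using b by simp
    next
      case False
      then have "C \<in> F - {{x}}" using CF by simp
      then obtain z where z: "z \<in> C" "sat_lit \<phi> z" using \<phi> by blast
      show ?thesis
      proof (cases "var z = var x")
        case True
        then have "z = x \<or> z = comp x" using lit_same_var by blast
        moreover have "z \<noteq> comp x" using no CF z(1) by blast
        ultimately have "z = x" by simp
        thus ?thesis using z(1) b by blast
      next
        case False
        thus ?thesis using z sat_upd_other[of z "var x" \<phi> b] by auto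
      qed
    qed
  qed
  thus False using mu unsat_fact by blast
qed

lemma ldeg_pos:
  assumes mu: "min_unsat F" and "\<exists>C\<in>F. l \<in> C"
  shows "ldeg F l \<ge> 1"
proof -
  have "finite F" using mu by (simp add: min_unsat_def clause_set_def)
  moreover have "{C\<in>F. l\<in>C} \<noteq> {}" using assms(2) by auto
  ultimately show ?thesis unfolding ldeg_def
    by (metis (no_types, lifting) One_nat_def Suc_leI card_gt_0_iff finite_subset mem_Collect_eq subsetI)
qed

lemma sat_part:
  assumes sat: "saturated F" and xF: "{x} \<in> F" and CF: "C \<in> F"
  shows "var x \<in> vars_cl C"
proof (rule ccontr)
  assume nv: "var x \<notin> vars_cl C"
  have mu: "min_unsat F" using sat unfolding saturated_def by (rule conjunct1)
  have S: "\<forall>C\<in>F. \<forall>y. var y \<in> vars F - vars_cl C \<longrightarrow> satisfiable ((F - {C}) \<union> {C \<union> {y}})"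
    using sat unfolding saturated_def by (rule conjunct2)
  have "var x \<in> vars_cl {x}" by (simp add: vars_cl_def)
  then have "var x \<in> vars F" using xF unfolding vars_def by blast
  then have "var (comp x) \<in> vars F - vars_cl C" using nv by simp
  then have "satisfiable ((F - {C}) \<union> {C \<union> {comp x}})"
    using S CF by blast
  then obtain \<phi> where \<phi>: "\<forall>D\<in>(F - {C}) \<union> {C \<union> {comp x}}. \<exists>z\<in>D. sat_lit \<phi> z"
    unfolding satisfiable_def by blast
  have "C \<noteq> {x}" using nv by (auto simp: vars_cl_def)
  then have "{x} \<in> (F - {C}) \<union> {C \<union> {comp x}}" using xF by blast
  then have "\<exists>z\<in>{x}. sat_lit \<phi> z" by (rule bspec[OF \<phi>])
  then have sx: "sat_lit \<phi> x" by simp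
  have "\<exists>z\<in>C \<union> {comp x}. sat_lit \<phi> z" by (rule bspec[OF \<phi>]) blast
  then obtain z where z: "z \<in> C \<union> {comp x}" "sat_lit \<phi> z" by blast
  have "z \<noteq> comp x" using sx z(2) by auto
  then have zC: "z \<in> C" using z(1) by blast
  have "\<forall>D\<in>F. \<exists>z\<in>D. sat_lit \<phi> z"
  proof
    fix D assume DF: "D \<in> F"
    show "\<exists>z\<in>D. sat_lit \<phi> z"
    proof (cases "D = C")
      case True thus ?thesis using zC z(2) by blast
    next
      case False
      then have "D \<in> (F - {C}) \<union> {C \<union> {comp x}}" using DF by blast
      thus ?thesis by (rule bspec[OF \<phi>])
    qed
  qed
  thus False using mu unsat_fact by blast
qed

theorem lemma14:
  fixes F :: "'v cls"
  assumes "min_unsat F"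
  shows "(\<forall>v. singular F v \<and> (\<forall>C\<in>F. v \<in> vars_cl C)
              \<longrightarrow> {Pos v} \<in> F \<or> {Neg v} \<in> F)
       \<and> (\<forall>x. {x} \<in> F \<longrightarrow>
              singular F (var x) \<and> ldeg F x = 1 \<and>
              (saturated F \<longrightarrow> (\<forall>C\<in>F. var x \<in> vars_cl C)))"
proof (intro conjI allI impI)
  fix v assume h: "singular F v \<and> (\<forall>C\<in>F. v \<in> vars_cl C)"
  then have "ldeg F (Pos v) = 1 \<or> ldeg F (Neg v) = 1"
    by (auto simp: singular_def min_def split: if_splits)
  moreover have "\<forall>C\<in>F. var (Pos v) \<in> vars_cl C" "\<forall>C\<in>F. var (Neg v) \<in> vars_cl C"
    using h by simp_all
  ultimately show "{Pos v} \<in> F \<or> {Neg v} \<in> F"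
    using part1[OF assms, of "Pos v"] part1[OF assms, of "Neg v"] by blast
next
  fix x assume xF: "{x} \<in> F"
  have dx: "ldeg F x = 1" using ldeg_unit[OF assms xF] by (simp add: ldeg_def)
  thus "ldeg F x = 1" .
  have dc: "ldeg F (comp x) \<ge> 1" using ldeg_pos[OF assms comp_occurs[OF assms xF]] .
  show "singular F (var x)"
  proof (cases x)
    case (Pos v) thus ?thesis using dx dc by (simp add: singular_def)
  next
    case (Neg v) thus ?thesis using dx dc by (simp add: singular_def)
  qed
next
  fix x assume a: "{x} \<in> F" "saturated F"
  show "\<forall>C\<in>F. var x \<in> vars_cl C"
  proof
    fix C assume "C \<in> F"
    thus "var x \<in> vars_cl C" using sat_part[OF a(2) a(1)] by blast
  qed
qed

end
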